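(* Let $L_1,L_2,L_3\in\mathbb{Z}[x_1,x_2]$ be pairwise non-proportional linear forms, let $\Delta_{i,j}$ denote the resultant of $L_i,L_j$ and $\Delta=|\Delta_{1,2}\Delta_{1,3}\Delta_{2,3}|\neq0$. Write $L_i=\ell_iL_i^*$ with $\ell_i\in\mathbb{Z}$ and $L_i^*$ primitive. For $\mathbf{h}\in\mathbb{N}^3$ let $$\rho(\mathbf{h})=\#\{\mathbf{x}\in[0,h_1h_2h_3)^2\cap\mathbb{Z}^2:\ h_i\mid L_i(\mathbf{x})\ (i=1,2,3)\}.$$ Let $p$ be a prime and $e_1,e_2,e_3\ge0$ integers. (i) If $\min\{e_i,v_p(\ell_i)\}=0$ (for the relevant index $i$), then respectively $\rho(p^{e_1},1,1)=p^{e_1}$, $\rho(1,p^{e_2},1)=p^{e_2}$, $\rho(1,1,p^{e_3})=p^{e_3}$. (ii) Suppose $0\le e_i\le e_j\le e_k$ for a permutation $\{i,j,k\}$ of $\{1,2,3\}$. Then $\rho(p^{e_1},p^{e_2},p^{e_3})=p^{2e_i+e_j+e_k}$ if $p\nmid\Delta$, while if $p\mid\Delta$, $$\rho(p^{e_1},p^{e_2},p^{e_3})\le p^{2e_i+e_j+e_k+\min\{e_j,v_p(\Delta)\}+\min\{e_k,v_p(\ell_k)\}}.$$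
   Context: $v_p$ denotes the $p$-adic valuation. *)

theory Defs
  imports "HOL-Computational_Algebra.Computational_Algebra"
begin

definition lin :: "(nat \<Rightarrow> int) \<Rightarrow> (nat \<Rightarrow> int) \<Rightarrow> nat \<Rightarrow> int \<Rightarrow> int \<Rightarrow> int" where
  "lin a b i x y = a i * x + b i * y"

definition res :: "(nat \<Rightarrow> int) \<Rightarrow> (nat \<Rightarrow> int) \<Rightarrow> nat \<Rightarrow> nat \<Rightarrow> int" where
  "res a b i j = a i * b j - a j * b i"

definition Delta :: "(nat \<Rightarrow> int) \<Rightarrow> (nat \<Rightarrow> int) \<Rightarrow> int" where
  "Delta a b = \<bar>res a b 1 2 * res a b 1 3 * res a b 2 3\<bar>"

definition ell :: "(nat \<Rightarrow> int) \<Rightarrow> (nat \<Rightarrow> int) \<Rightarrow> nat \<Rightarrow> int" where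
  "ell a b i = gcd (a i) (b i)"

definition proportional :: "(nat \<Rightarrow> int) \<Rightarrow> (nat \<Rightarrow> int) \<Rightarrow> nat \<Rightarrow> nat \<Rightarrow> bool" where
  "proportional a b i j \<longleftrightarrow> (\<exists>c d :: int. (c, d) \<noteq> (0, 0) \<and> c * a i = d * a j \<and> c * b i = d * b j)"

definition rho :: "(nat \<Rightarrow> int) \<Rightarrow> (nat \<Rightarrow> int) \<Rightarrow> nat \<Rightarrow> nat \<Rightarrow> nat \<Rightarrow> nat" where
  "rho a b h1 h2 h3 = card {(x :: int, y :: int).
      0 \<le> x \<and> x < int (h1 * h2 * h3) \<and> 0 \<le> y \<and> y < int (h1 * h2 * h3) \<and>
      int h1 dvd lin a b 1 x y \<and> int h2 dvd lin a b 2 x y \<and> int h3 dvd lin a b 3 x y}"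

end

theory Submission
  imports Defs
begin

lemma small_dvd_zero:
  fixes q u :: int
  assumes "q dvd u" "-q < u" "u < q"
  shows "u = 0"
proof -
  obtain k where "u = q * k" using assms(1) by blast
  then show ?thesis using assms
    by (smt (verit, best) mult_less_cancel_left mult_minus_right mult_cancel_left1 mult_right_less_imp_less mult_less_0_iff zero_less_mult_iff)
qed

lemma card_residues:
  fixes q D r :: int
  assumes "D > 0" "D dvd q" "q > 0"
  shows "card {Y. 0 \<le> Y \<and> Y < q \<and> Y mod D = r mod D} = nat (q div D)"
proof -
  obtain Q where q: "q = D * Q" using assms(2) by blast
  have Qpos: "Q > 0" using assms q by (simp add: zero_less_mult_iff)
  have qd: "q div D = Q" using q assms by simp
  have eq: "{Y. 0 \<le> Y \<and> Y < q \<and> Y mod D = r mod D} = (\<lambda>t. r mod D + D * t) ` {0..<Q}"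
  proof (rule set_eqI, rule iffI)
    fix Y assume "Y \<in> {Y. 0 \<le> Y \<and> Y < q \<and> Y mod D = r mod D}"
    then have Y: "0 \<le> Y" "Y < q" "Y mod D = r mod D" by auto
    have e: "Y = r mod D + D * (Y div D)" using Y(3) div_mult_mod_eq[of Y D]
      by (simp add: algebra_simps)
    have "0 \<le> Y div D" using Y assms by (simp add: div_int_pos_iff)
    moreover have "Y div D < Q"
    proof (rule ccontr)
      assume "\<not> Y div D < Q"
      then have "D * Q \<le> D * (Y div D)" using assms by simp
      moreover have "D * (Y div D) \<le> Y"
      proof -
        have e1: "D * (Y div D) + Y mod D = Y" by (metis div_mult_mod_eq mult.commute)
        have "0 \<le> Y mod D" using assms by simp
        then show ?thesis using e1 by linarith
      qed
      ultimately show False using Y q by simp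
    qed
    ultimately show "Y \<in> (\<lambda>t. r mod D + D * t) ` {0..<Q}" using e by auto
  next
    fix Y assume "Y \<in> (\<lambda>t. r mod D + D * t) ` {0..<Q}"
    then obtain t where t: "0 \<le> t" "t < Q" "Y = r mod D + D * t" by auto
    have "D * t \<le> D * (Q - 1)" using t assms by simp
    then have h1: "D * t \<le> D * Q - D" by (simp add: algebra_simps)
    have h2: "r mod D < D" using assms by simp
    have h3: "0 \<le> r mod D" using assms by simp
    have h4: "0 \<le> D * t" using t assms by simp
    have "0 \<le> Y \<and> Y < q" using t(3) q h1 h2 h3 h4 by linarith
    moreover have "Y mod D = r mod D" using t by simp
    ultimately show "Y \<in> {Y. 0 \<le> Y \<and> Y < q \<and> Y mod D = r mod D}" by simp
  qed
  have "inj_on (\<lambda>t. r mod D + D * t) {0..<Q}" using assms by (auto simp: inj_on_def)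
  then show ?thesis unfolding eq qd by (simp add: card_image)
qed



lemma fin_int_range[simp]: "finite {Y::int. 0 \<le> Y \<and> Y < q \<and> P Y}"
  by (rule finite_subset[of _ "{0..<q}"]) auto

lemma one_var_bound:
  fixes c d :: int and p N f :: nat
  assumes p: "prime p" and f: "f \<le> N" and d: "d \<noteq> 0"
  shows "card {Y. 0 \<le> Y \<and> Y < int p ^ N \<and> int p ^ f dvd c + d * Y}
           \<le> p ^ (N - f + min f (multiplicity (int p) d))"
proof -
  let ?S = "{Y. 0 \<le> Y \<and> Y < int p ^ N \<and> int p ^ f dvd c + d * Y}"
  let ?m = "min f (multiplicity (int p) d)"
  define D where "D = int p ^ (f - ?m)"
  have pp: "prime (int p)" using p by simp
  have p1: "int p > 1" using p prime_gt_1_nat by auto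
  have Dpos: "D > 0" unfolding D_def using p1 by simp
  have Ddvd: "D dvd int p ^ N" unfolding D_def using f by (simp add: le_imp_power_dvd)
  have qpos: "int p ^ N > 0" using p1 by simp
  show ?thesis
  proof (cases "?S = {}")
    case True then show ?thesis by (metis card.empty zero_le)
  next
    case False
    then obtain Y0 where Y0: "Y0 \<in> ?S" by blast
    have md: "int p ^ ?m dvd d" by (rule multiplicity_dvd') simp
    then obtain d' where d': "d = int p ^ ?m * d'" by blast
    have key: "D dvd Y - Y0" if Y: "Y \<in> ?S" for Y
    proof (cases "?m = f")
      case True then show ?thesis unfolding D_def by simp
    next
      case False
      then have mm: "?m = multiplicity (int p) d" by simp
      have nd: "\<not> int p dvd d'"
      proof
        assume "int p dvd d'"
        then obtain k where k: "d' = int p * k" by blast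
        have "d = int p ^ Suc ?m * k" using d' k by (metis mult.assoc mult.commute power_Suc)
        then have "int p ^ Suc ?m dvd d" by (rule dvdI)
        then have "Suc ?m \<le> multiplicity (int p) d"
          using multiplicity_geI[OF d, of "int p"] pp not_prime_unit by blast
        then show False using mm by simp
      qed
      have "int p ^ f dvd (c + d * Y) - (c + d * Y0)" using Y Y0 by (intro dvd_diff) auto
      then have "int p ^ f dvd d * (Y - Y0)" by (simp add: algebra_simps)
      moreover have "int p ^ f = int p ^ ?m * D" unfolding D_def
        by (metis power_add le_add_diff_inverse min.cobounded1)
      ultimately have "int p ^ ?m * D dvd int p ^ ?m * (d' * (Y - Y0))" using d' by (simp add: algebra_simps)
      then have "D dvd d' * (Y - Y0)" using p1 by simp
      moreover have "coprime (int p) d'" using nd pp by (rule prime_imp_coprime[rotated])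
      then have "coprime D d'" unfolding D_def by simp
      ultimately show ?thesis using coprime_dvd_mult_right_iff by blast
    qed
    have "?S \<subseteq> {Y. 0 \<le> Y \<and> Y < int p ^ N \<and> Y mod D = Y0 mod D}"
      using key by (auto simp: mod_eq_dvd_iff)
    then have "card ?S \<le> card {Y. 0 \<le> Y \<and> Y < int p ^ N \<and> Y mod D = Y0 mod D}"
      by (intro card_mono) auto
    also have "\<dots> = nat (int p ^ N div D)" using card_residues[OF Dpos Ddvd qpos] .
    also have "int p ^ N div D = int p ^ (N - f + ?m)"
    proof -
      have "N = (N - f + ?m) + (f - ?m)" using f by simp
      then have "int p ^ N = int p ^ (N - f + ?m) * D" unfolding D_def by (metis power_add)
      then show ?thesis using Dpos by simp
    qed
    also have "nat (int p ^ (N - f + ?m)) = p ^ (N - f + ?m)" by (metis nat_int of_nat_power)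
    finally show ?thesis .
  qed
qed



lemma card_transform:
  fixes q \<alpha> \<beta> \<gamma> \<delta> :: int
  assumes q: "q > 0" and cop: "coprime (\<alpha>*\<delta> - \<beta>*\<gamma>) q"
  shows "card {(x,y). 0 \<le> x \<and> x < q \<and> 0 \<le> y \<and> y < q \<and>
            P ((\<alpha>*x+\<beta>*y) mod q) ((\<gamma>*x+\<delta>*y) mod q)}
       = card {(X,Y). 0 \<le> X \<and> X < q \<and> 0 \<le> Y \<and> Y < q \<and> P X Y}"
proof -
  define B where "B = {(x::int,y::int). 0 \<le> x \<and> x < q \<and> 0 \<le> y \<and> y < q}"
  define F where "F = (\<lambda>(x::int,y::int). ((\<alpha>*x+\<beta>*y) mod q, (\<gamma>*x+\<delta>*y) mod q))"
  have Bprod: "B = {0..<q} \<times> {0..<q}" unfolding B_def by auto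
  have finB: "finite B" unfolding Bprod by simp
  have FB: "F ` B \<subseteq> B" unfolding B_def F_def using q by auto
  have copq: "coprime q (\<alpha>*\<delta> - \<beta>*\<gamma>)" using cop by (simp add: coprime_commute)
  have inj: "inj_on F B"
  proof (rule inj_onI)
    fix z z' assume zB: "z \<in> B" and z'B: "z' \<in> B" and Fe: "F z = F z'"
    obtain x y where z: "z = (x,y)" by (cases z)
    obtain x' y' where z': "z' = (x',y')" by (cases z')
    define u where "u = x - x'"
    define v where "v = y - y'"
    have e1: "q dvd (\<alpha>*x+\<beta>*y) - (\<alpha>*x'+\<beta>*y')"
      using Fe unfolding z z' F_def by (simp add: mod_eq_dvd_iff)
    have e2: "q dvd (\<gamma>*x+\<delta>*y) - (\<gamma>*x'+\<delta>*y')"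
      using Fe unfolding z z' F_def by (simp add: mod_eq_dvd_iff)
    have a1: "q dvd \<alpha>*u + \<beta>*v" using e1 unfolding u_def v_def by (simp add: algebra_simps)
    have a2: "q dvd \<gamma>*u + \<delta>*v" using e2 unfolding u_def v_def by (simp add: algebra_simps)
    have "q dvd \<delta>*(\<alpha>*u + \<beta>*v) - \<beta>*(\<gamma>*u + \<delta>*v)" using a1 a2 by (intro dvd_diff dvd_mult) auto
    then have "q dvd (\<alpha>*\<delta> - \<beta>*\<gamma>) * u" by (simp add: algebra_simps)
    then have du: "q dvd u" using copq coprime_dvd_mult_right_iff by blast
    have "q dvd \<alpha>*(\<gamma>*u + \<delta>*v) - \<gamma>*(\<alpha>*u + \<beta>*v)" using a1 a2 by (intro dvd_diff dvd_mult) auto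
    then have "q dvd (\<alpha>*\<delta> - \<beta>*\<gamma>) * v" by (simp add: algebra_simps)
    then have dv: "q dvd v" using copq coprime_dvd_mult_right_iff by blast
    have "u = 0" using du zB z'B unfolding z z' B_def u_def by (intro small_dvd_zero) auto
    moreover have "v = 0" using dv zB z'B unfolding z z' B_def v_def by (intro small_dvd_zero) auto
    ultimately show "z = z'" unfolding z z' u_def v_def by simp
  qed
  have FBeq: "F ` B = B" using endo_inj_surj[OF finB FB inj] .
  define S where "S = {z \<in> B. (case F z of (X,Y) \<Rightarrow> P X Y)}"
  define T where "T = {w \<in> B. (case w of (X,Y) \<Rightarrow> P X Y)}"
  have lhs: "{(x,y). 0 \<le> x \<and> x < q \<and> 0 \<le> y \<and> y < q \<and>
            P ((\<alpha>*x+\<beta>*y) mod q) ((\<gamma>*x+\<delta>*y) mod q)} = S"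
    unfolding S_def B_def F_def by auto
  have rhs: "{(X,Y). 0 \<le> X \<and> X < q \<and> 0 \<le> Y \<and> Y < q \<and> P X Y} = T"
    unfolding T_def B_def by auto
  have img: "F ` S = T"
  proof
    show "F ` S \<subseteq> T" unfolding S_def T_def using FB by auto
    show "T \<subseteq> F ` S"
    proof
      fix w assume "w \<in> T"
      then have wB: "w \<in> B" and Pw: "case w of (X,Y) \<Rightarrow> P X Y" unfolding T_def by auto
      then obtain z where "z \<in> B" "w = F z" using FBeq by blast
      then show "w \<in> F ` S" unfolding S_def using Pw by auto
    qed
  qed
  have "inj_on F S" using inj unfolding S_def by (rule inj_on_subset) auto
  then have "card S = card T" using img card_image by fastforce
  then show ?thesis using lhs rhs by simp
qed



lemma normalize_form:
  fixes \<alpha> \<beta> :: int assumes "\<alpha> \<noteq> 0 \<or> \<beta> \<noteq> 0"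
  obtains l a' b' s t where "l = gcd \<alpha> \<beta>" "\<alpha> = l * a'" "\<beta> = l * b'" "s*a' + t*b' = 1"
proof -
  define a' where "a' = \<alpha> div gcd \<alpha> \<beta>"
  define b' where "b' = \<beta> div gcd \<alpha> \<beta>"
  have "coprime a' b'" unfolding a'_def b'_def using div_gcd_coprime[OF assms] .
  then have g: "gcd a' b' = 1" by (simp add: coprime_iff_gcd_eq_1)
  obtain s t where "s*a' + t*b' = gcd a' b'" using bezout_int by blast
  then have "s*a' + t*b' = 1" using g by simp
  moreover have "\<alpha> = gcd \<alpha> \<beta> * a'" unfolding a'_def by simp
  moreover have "\<beta> = gcd \<alpha> \<beta> * b'" unfolding b'_def by simp
  ultimately show ?thesis using that by blast
qed

lemma dvd_cong_mod: "(m::int) dvd q \<Longrightarrow> A mod q = B mod q \<Longrightarrow> m dvd A \<longleftrightarrow> m dvd B"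
  by (metis dvd_mod_iff)

lemma part_i:
  fixes \<alpha> \<beta> :: int and p e :: nat
  assumes nz: "\<alpha> \<noteq> 0 \<or> \<beta> \<noteq> 0" and p: "prime p" and cop: "coprime (gcd \<alpha> \<beta>) (int p ^ e)"
  shows "card {(x,y). 0 \<le> x \<and> x < int p ^ e \<and> 0 \<le> y \<and> y < int p ^ e \<and>
            int p ^ e dvd \<alpha>*x + \<beta>*y} = p ^ e"
proof -
  let ?q = "int p ^ e"
  have q: "?q > 0" using p prime_gt_0_nat by simp
  obtain l a' b' s t where l: "l = gcd \<alpha> \<beta>" and ab: "\<alpha> = l * a'" "\<beta> = l * b'" and st: "s*a' + t*b' = 1"
    using normalize_form[OF nz] by blast
  have copl: "coprime ?q l" using cop l by (simp add: coprime_commute)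
  have pw: "(?q dvd \<alpha>*x + \<beta>*y) = (?q dvd (a'*x+b'*y) mod ?q)" for x y
  proof -
    have "\<alpha>*x + \<beta>*y = l * (a'*x+b'*y)" unfolding ab by (simp add: algebra_simps)
    then have "(?q dvd \<alpha>*x + \<beta>*y) = (?q dvd a'*x+b'*y)"
      using copl coprime_dvd_mult_right_iff by metis
    then show ?thesis by (simp add: dvd_mod_iff)
  qed
  have c1: "coprime (a' * s - b' * (- t)) ?q"
  proof -
    have "a' * s - b' * (- t) = 1" using st by (simp add: algebra_simps)
    then show ?thesis by simp
  qed
  have s1: "{(x,y). 0 \<le> x \<and> x < ?q \<and> 0 \<le> y \<and> y < ?q \<and> ?q dvd \<alpha>*x + \<beta>*y}
      = {(x,y). 0 \<le> x \<and> x < ?q \<and> 0 \<le> y \<and> y < ?q \<and>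
            (\<lambda>X Y. ?q dvd X) ((a'*x+b'*y) mod ?q) (((-t)*x+s*y) mod ?q)}"
    using pw by simp
  have s2: "card {(x,y). 0 \<le> x \<and> x < ?q \<and> 0 \<le> y \<and> y < ?q \<and>
            (\<lambda>X Y. ?q dvd X) ((a'*x+b'*y) mod ?q) (((-t)*x+s*y) mod ?q)}
     = card {(X,Y). 0 \<le> X \<and> X < ?q \<and> 0 \<le> Y \<and> Y < ?q \<and> (\<lambda>X Y. ?q dvd X) X Y}"
    by (rule card_transform[OF q c1, where P="\<lambda>X Y. ?q dvd X"])
  have s3: "{(X,Y). 0 \<le> X \<and> X < ?q \<and> 0 \<le> Y \<and> Y < ?q \<and> (\<lambda>X Y. ?q dvd X) X Y} = {0} \<times> {0..<?q}"
  proof (rule set_eqI)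
    fix w :: "int \<times> int"
    obtain X Y where w: "w = (X,Y)" by (cases w)
    have "(0 \<le> X \<and> X < ?q \<and> ?q dvd X) = (X = 0)"
      using q small_dvd_zero[of ?q X] by auto
    then show "w \<in> {(X,Y). 0 \<le> X \<and> X < ?q \<and> 0 \<le> Y \<and> Y < ?q \<and> (\<lambda>X Y. ?q dvd X) X Y} \<longleftrightarrow> w \<in> {0} \<times> {0..<?q}"
      unfolding w by auto
  qed
  have s4: "card ({0::int} \<times> {0..<?q}) = p ^ e"
    by (simp add: card_cartesian_product nat_power_eq)
  show ?thesis unfolding s1 s2 s3 s4 ..
qed



lemma card_mult_set:
  fixes p N f :: nat assumes "prime p" "f \<le> N"
  shows "card {Y. 0 \<le> Y \<and> Y < int p ^ N \<and> int p ^ f dvd Y} = p ^ (N - f)"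
proof -
  have p1: "int p > 1" using assms prime_gt_1_nat by auto
  have "card {Y. 0 \<le> Y \<and> Y < int p ^ N \<and> Y mod (int p ^ f) = 0 mod (int p ^ f)} = nat (int p ^ N div int p ^ f)"
    using p1 assms by (intro card_residues) (auto simp: le_imp_power_dvd)
  moreover have "int p ^ N div int p ^ f = int p ^ (N - f)" using p1 assms by (simp add: power_diff)
  ultimately show ?thesis by (simp add: dvd_eq_mod_eq_0 nat_power_eq)
qed

lemma part_eq:
  fixes aj bj ak bk :: int and p N fj fk :: nat
  assumes p: "prime p" and fj: "fj \<le> N" and fk: "fk \<le> N"
    and cop: "coprime (aj*bk - bj*ak) (int p ^ N)"
  shows "card {(x,y). 0 \<le> x \<and> x < int p ^ N \<and> 0 \<le> y \<and> y < int p ^ N \<and>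
            int p ^ fj dvd aj*x + bj*y \<and> int p ^ fk dvd ak*x + bk*y} = p ^ (N - fj) * p ^ (N - fk)"
proof -
  let ?q = "int p ^ N"
  let ?P = "\<lambda>X Y. int p ^ fj dvd X \<and> int p ^ fk dvd Y"
  have q: "?q > 0" using p prime_gt_0_nat by simp
  have dj: "int p ^ fj dvd ?q" using fj by (simp add: le_imp_power_dvd)
  have dk: "int p ^ fk dvd ?q" using fk by (simp add: le_imp_power_dvd)
  have s1: "{(x,y). 0 \<le> x \<and> x < ?q \<and> 0 \<le> y \<and> y < ?q \<and>
            int p ^ fj dvd aj*x + bj*y \<and> int p ^ fk dvd ak*x + bk*y}
      = {(x,y). 0 \<le> x \<and> x < ?q \<and> 0 \<le> y \<and> y < ?q \<and>
            ?P ((aj*x+bj*y) mod ?q) ((ak*x+bk*y) mod ?q)}"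
    using dj dk by (simp add: dvd_mod_iff)
  have s2: "card {(x,y). 0 \<le> x \<and> x < ?q \<and> 0 \<le> y \<and> y < ?q \<and>
            ?P ((aj*x+bj*y) mod ?q) ((ak*x+bk*y) mod ?q)}
      = card {(X,Y). 0 \<le> X \<and> X < ?q \<and> 0 \<le> Y \<and> Y < ?q \<and> ?P X Y}"
    by (rule card_transform[OF q cop, where P="?P"])
  have s3: "{(X,Y). 0 \<le> X \<and> X < ?q \<and> 0 \<le> Y \<and> Y < ?q \<and> ?P X Y}
      = {X. 0 \<le> X \<and> X < ?q \<and> int p ^ fj dvd X} \<times> {Y. 0 \<le> Y \<and> Y < ?q \<and> int p ^ fk dvd Y}"
    by auto
  have s4: "card ({X. 0 \<le> X \<and> X < ?q \<and> int p ^ fj dvd X} \<times> {Y. 0 \<le> Y \<and> Y < ?q \<and> int p ^ fk dvd Y})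
     = p ^ (N - fj) * p ^ (N - fk)"
    using card_mult_set[OF p fj] card_mult_set[OF p fk] by (simp add: card_cartesian_product)
  show ?thesis unfolding s1 s2 s3 s4 ..
qed

lemma part_bound:
  fixes aj bj ak bk :: int and p N fj fk :: nat
  assumes p: "prime p" and fj: "fj \<le> N" and fk: "fk \<le> N"
    and nz: "ak \<noteq> 0 \<or> bk \<noteq> 0" and r: "aj*bk - ak*bj \<noteq> 0"
  shows "card {(x,y). 0 \<le> x \<and> x < int p ^ N \<and> 0 \<le> y \<and> y < int p ^ N \<and>
            int p ^ fj dvd aj*x + bj*y \<and> int p ^ fk dvd ak*x + bk*y}
     \<le> p ^ (N - fk + min fk (multiplicity (int p) (gcd ak bk)))
        * p ^ (N - fj + min fj (multiplicity (int p) (aj*bk - ak*bj)))"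
proof -
  let ?q = "int p ^ N"
  have q: "?q > 0" using p prime_gt_0_nat by simp
  have p1: "p \<ge> 1" using p prime_gt_0_nat by (simp add: Suc_leI)
  have dj: "int p ^ fj dvd ?q" using fj by (simp add: le_imp_power_dvd)
  have dk: "int p ^ fk dvd ?q" using fk by (simp add: le_imp_power_dvd)
  obtain l a' b' s t where l: "l = gcd ak bk" and ab: "ak = l * a'" "bk = l * b'" and st: "s*a' + t*b' = 1"
    using normalize_form[OF nz] by blast
  define c where "c = aj * s + bj * t"
  define d where "d = bj * a' - aj * b'"
  have ld: "l * d = - (aj*bk - ak*bj)" unfolding d_def ab by (simp add: algebra_simps)
  have lnz: "l \<noteq> 0" using ld r by auto
  have dnz: "d \<noteq> 0" using ld r by auto
  have ddvd: "d dvd (aj*bk - ak*bj)" using ld by (metis dvd_minus_iff dvd_triv_right)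
  have md: "multiplicity (int p) d \<le> multiplicity (int p) (aj*bk - ak*bj)"
    by (rule dvd_imp_multiplicity_le[OF ddvd r])
  have c1: "coprime (a' * s - b' * (- t)) ?q"
  proof -
    have "a' * s - b' * (- t) = 1" using st by (simp add: algebra_simps)
    then show ?thesis by simp
  qed
  let ?P = "\<lambda>X Y. int p ^ fk dvd 0 + l * X \<and> int p ^ fj dvd c * X + d * Y"
  have pw: "(int p ^ fj dvd aj*x + bj*y \<and> int p ^ fk dvd ak*x + bk*y) =
            ?P ((a'*x+b'*y) mod ?q) (((-t)*x+s*y) mod ?q)" for x y
  proof -
    define X0 where "X0 = a'*x+b'*y"
    define Y0 where "Y0 = (-t)*x+s*y"
    have ek: "ak*x + bk*y = 0 + l * X0" unfolding X0_def ab by (simp add: algebra_simps)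
    have "c * X0 + d * Y0 = (aj*x + bj*y) * (s*a' + t*b')"
      unfolding c_def d_def X0_def Y0_def by (simp add: algebra_simps)
    then have ej: "aj*x + bj*y = c * X0 + d * Y0" using st by simp
    have m1: "(0 + l * X0) mod ?q = (0 + l * (X0 mod ?q)) mod ?q" by (simp add: mod_mult_right_eq)
    have "(c * (X0 mod ?q) + d * (Y0 mod ?q)) mod ?q = ((c * (X0 mod ?q)) mod ?q + (d * (Y0 mod ?q)) mod ?q) mod ?q"
      by (rule mod_add_eq[symmetric])
    also have "\<dots> = ((c * X0) mod ?q + (d * Y0) mod ?q) mod ?q" by (simp only: mod_mult_right_eq)
    also have "\<dots> = (c * X0 + d * Y0) mod ?q" by (rule mod_add_eq)
    finally have m2: "(c * X0 + d * Y0) mod ?q = (c * (X0 mod ?q) + d * (Y0 mod ?q)) mod ?q" ..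
    show ?thesis unfolding ek ej X0_def[symmetric] Y0_def[symmetric]
      using dvd_cong_mod[OF dk m1] dvd_cong_mod[OF dj m2] by auto
  qed
  have s1: "{(x,y). 0 \<le> x \<and> x < ?q \<and> 0 \<le> y \<and> y < ?q \<and>
            int p ^ fj dvd aj*x + bj*y \<and> int p ^ fk dvd ak*x + bk*y}
      = {(x,y). 0 \<le> x \<and> x < ?q \<and> 0 \<le> y \<and> y < ?q \<and>
            ?P ((a'*x+b'*y) mod ?q) (((-t)*x+s*y) mod ?q)}"
    using pw by simp
  have s2: "card {(x,y). 0 \<le> x \<and> x < ?q \<and> 0 \<le> y \<and> y < ?q \<and>
            ?P ((a'*x+b'*y) mod ?q) (((-t)*x+s*y) mod ?q)}
      = card {(X,Y). 0 \<le> X \<and> X < ?q \<and> 0 \<le> Y \<and> Y < ?q \<and> ?P X Y}"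
    by (rule card_transform[OF q c1, where P="?P"])
  define A where "A = {X. 0 \<le> X \<and> X < ?q \<and> int p ^ fk dvd 0 + l * X}"
  define C where "C = (\<lambda>X. {Y. 0 \<le> Y \<and> Y < ?q \<and> int p ^ fj dvd c * X + d * Y})"
  let ?bA = "p ^ (N - fk + min fk (multiplicity (int p) l))"
  let ?bC = "p ^ (N - fj + min fj (multiplicity (int p) (aj*bk - ak*bj)))"
  have finA: "finite A" unfolding A_def by simp
  have finC: "finite (C X)" for X unfolding C_def by simp
  have cA: "card A \<le> ?bA" unfolding A_def by (rule one_var_bound[OF p fk lnz])
  have cC: "card (C X) \<le> ?bC" for X
  proof -
    have "card (C X) \<le> p ^ (N - fj + min fj (multiplicity (int p) d))"
      unfolding C_def by (rule one_var_bound[OF p fj dnz])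
    also have "\<dots> \<le> ?bC" using md p1 by (intro power_increasing) auto
    finally show ?thesis .
  qed
  have sub: "{(X,Y). 0 \<le> X \<and> X < ?q \<and> 0 \<le> Y \<and> Y < ?q \<and> ?P X Y} \<subseteq> Sigma A C"
    unfolding A_def C_def by auto
  have "card {(X,Y). 0 \<le> X \<and> X < ?q \<and> 0 \<le> Y \<and> Y < ?q \<and> ?P X Y} \<le> card (Sigma A C)"
    by (rule card_mono[OF _ sub]) (simp add: finA finC)
  also have "card (Sigma A C) = (\<Sum>X\<in>A. card (C X))" using finA finC by simp
  also have "\<dots> \<le> (\<Sum>X\<in>A. ?bC)" by (rule sum_mono) (rule cC)
  also have "\<dots> = card A * ?bC" by simp
  also have "\<dots> \<le> ?bA * ?bC" using cA by simp
  finally have fin: "card {(X,Y). 0 \<le> X \<and> X < ?q \<and> 0 \<le> Y \<and> Y < ?q \<and> ?P X Y} \<le> ?bA * ?bC" .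
  show ?thesis unfolding s1 s2 l[symmetric] using fin .
qed



lemma cop_from_min:
  fixes g :: int and p e :: nat
  assumes p: "prime p" and g: "g \<noteq> 0" and m: "min e (multiplicity (int p) g) = 0"
  shows "coprime g (int p ^ e)"
proof (cases "e = 0")
  case True then show ?thesis by simp
next
  case False
  then have m0: "multiplicity (int p) g = 0" using m by simp
  have pp: "prime (int p)" using p by simp
  have "\<not> int p dvd g"
  proof
    assume "int p dvd g"
    then have "1 \<le> multiplicity (int p) g"
      using multiplicity_geI[OF g, of "int p" 1] pp not_prime_unit by auto
    then show False using m0 by simp
  qed
  then have "coprime (int p) g" using pp by (rule prime_imp_coprime[rotated])
  then show ?thesis by (simp add: coprime_commute)
qed

lemma delta_facts:
  assumes "Delta a b \<noteq> 0"
  shows "res a b 1 2 \<noteq> 0" "res a b 1 3 \<noteq> 0" "res a b 2 3 \<noteq> 0"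
  using assms unfolding Delta_def by auto

lemma res_swap: "res a b k j = - res a b j k"
  unfolding res_def by (simp add: algebra_simps)

lemma res_dvd_Delta:
  assumes "(j,k) \<in> {(1,2),(1,3),(2,1),(2,3),(3,1),(3,2)}"
  shows "res a b j k dvd Delta a b"
proof -
  let ?P = "res a b 1 2 * res a b 1 3 * res a b 2 3"
  have d12: "res a b 1 2 dvd ?P" "res a b 1 3 dvd ?P" "res a b 2 3 dvd ?P"
    by (simp_all add: dvd_mult2 dvd_mult)
  have "res a b j k = res a b 1 2 \<or> res a b j k = - res a b 1 2 \<or>
        res a b j k = res a b 1 3 \<or> res a b j k = - res a b 1 3 \<or>
        res a b j k = res a b 2 3 \<or> res a b j k = - res a b 2 3"
    using assms res_swap[of a b 1 2] res_swap[of a b 1 3] res_swap[of a b 2 3] by auto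
  then have "res a b j k dvd ?P" using d12 by (elim disjE) simp_all
  then show ?thesis unfolding Delta_def by (simp add: dvd_abs_iff)
qed

lemma form_nz:
  assumes "Delta a b \<noteq> 0" "m \<in> {1,2,3}"
  shows "a m \<noteq> 0 \<or> b m \<noteq> 0"
  using delta_facts[OF assms(1)] assms(2) unfolding res_def by auto



lemma part_ii:
  fixes a b :: "nat \<Rightarrow> int" and p :: nat and e :: "nat \<Rightarrow> nat"
  assumes Dnz: "Delta a b \<noteq> 0" and p: "prime p"
    and perm: "(i,j,k) \<in> {(1,2,3),(1,3,2),(2,1,3),(2,3,1),(3,1,2),(3,2,1)}"
    and eij: "e i \<le> e j" and ejk: "e j \<le> e k"
  shows "(\<not> int p dvd Delta a b \<longrightarrow>
           rho a b (p ^ e 1) (p ^ e 2) (p ^ e 3) = p ^ (2 * e i + e j + e k)) \<and>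
        (int p dvd Delta a b \<longrightarrow>
           rho a b (p ^ e 1) (p ^ e 2) (p ^ e 3) \<le>
             p ^ (2 * e i + e j + e k + min (e j) (multiplicity (int p) (Delta a b))
                  + min (e k) (multiplicity (int p) (ell a b k))))"
proof -
  define N where "N = e 1 + e 2 + e 3"
  have NN: "N = e i + e j + e k" unfolding N_def using perm by auto
  have M: "int (p ^ e 1 * p ^ e 2 * p ^ e 3) = int p ^ N" by (simp add: N_def power_add)
  define Q where "Q = (\<lambda>m x y. int p ^ e m dvd a m * x + b m * y)"
  let ?q = "int p ^ N"
  have r0: "rho a b (p ^ e 1) (p ^ e 2) (p ^ e 3) =
     card {(x,y). 0 \<le> x \<and> x < ?q \<and> 0 \<le> y \<and> y < ?q \<and> Q 1 x y \<and> Q 2 x y \<and> Q 3 x y}"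
    unfolding rho_def lin_def M Q_def by simp
  have reord: "(Q 1 x y \<and> Q 2 x y \<and> Q 3 x y) = (Q i x y \<and> Q j x y \<and> Q k x y)" for x y
    using perm by auto
  define T where "T = {(x,y). 0 \<le> x \<and> x < ?q \<and> 0 \<le> y \<and> y < ?q \<and> Q j x y \<and> Q k x y}"
  have finT: "finite T"
    by (rule finite_subset[of _ "{0..<?q} \<times> {0..<?q}"]) (auto simp: T_def)
  have rT: "rho a b (p ^ e 1) (p ^ e 2) (p ^ e 3) =
     card {(x,y). 0 \<le> x \<and> x < ?q \<and> 0 \<le> y \<and> y < ?q \<and> Q i x y \<and> Q j x y \<and> Q k x y}"
    unfolding r0 using reord by simp
  have fj: "e j \<le> N" and fk: "e k \<le> N" using NN by auto
  have jk: "(j,k) \<in> {(1,2),(1,3),(2,1),(2,3),(3,1),(3,2)}" using perm by auto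
  have resdvd: "res a b j k dvd Delta a b" by (rule res_dvd_Delta[OF jk])
  have resnz: "res a b j k \<noteq> 0" using resdvd Dnz by auto
  have knz: "a k \<noteq> 0 \<or> b k \<noteq> 0" using form_nz[OF Dnz] perm by auto
  have Tcard: "card T = card {(x,y). 0 \<le> x \<and> x < int p ^ N \<and> 0 \<le> y \<and> y < int p ^ N \<and>
            int p ^ e j dvd a j*x + b j*y \<and> int p ^ e k dvd a k*x + b k*y}"
    unfolding T_def Q_def ..
  have expo: "N - e j + (N - e k) = 2 * e i + e j + e k" using NN by simp
  show ?thesis
  proof (intro conjI impI)
    assume nd: "\<not> int p dvd Delta a b"
    have pp: "prime (int p)" using p by simp
    have "\<not> int p dvd res a b j k" using nd resdvd dvd_trans by blast
    then have "coprime (int p) (res a b j k)" using pp by (rule prime_imp_coprime[rotated])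
    then have copr: "coprime (res a b j k) (int p ^ N)" by (simp add: coprime_commute)
    have copi: "coprime (int p ^ e i) (res a b j k)"
      using \<open>coprime (int p) (res a b j k)\<close> by simp
    have cop: "coprime (a j * b k - b j * a k) (int p ^ N)"
      using copr unfolding res_def by (simp add: mult.commute)
    have iden: "res a b j k * (a i * x + b i * y) =
        res a b i k * (a j * x + b j * y) - res a b i j * (a k * x + b k * y)" for x y
      unfolding res_def by (simp add: algebra_simps)
    have red: "Q j x y \<Longrightarrow> Q k x y \<Longrightarrow> Q i x y" for x y
    proof -
      assume qj: "Q j x y" and qk: "Q k x y"
      have "int p ^ e i dvd int p ^ e j" using eij by (simp add: le_imp_power_dvd)
      then have d1: "int p ^ e i dvd a j * x + b j * y" using qj unfolding Q_def by (rule dvd_trans)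
      have "int p ^ e i dvd int p ^ e k" using eij ejk by (simp add: le_imp_power_dvd)
      then have d2: "int p ^ e i dvd a k * x + b k * y" using qk unfolding Q_def by (rule dvd_trans)
      have "int p ^ e i dvd res a b i k * (a j * x + b j * y) - res a b i j * (a k * x + b k * y)"
        using d1 d2 by (intro dvd_diff dvd_mult) 
      then have "int p ^ e i dvd res a b j k * (a i * x + b i * y)" using iden by simp
      then show "Q i x y" unfolding Q_def using copi coprime_dvd_mult_right_iff by blast
    qed
    have "{(x,y). 0 \<le> x \<and> x < ?q \<and> 0 \<le> y \<and> y < ?q \<and> Q i x y \<and> Q j x y \<and> Q k x y} = T"
      unfolding T_def using red by blast
    then have "rho a b (p ^ e 1) (p ^ e 2) (p ^ e 3) = card T" using rT by simp
    also have "\<dots> = p ^ (N - e j) * p ^ (N - e k)" unfolding Tcard by (rule part_eq[OF p fj fk cop])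
    also have "\<dots> = p ^ (2 * e i + e j + e k)" by (simp add: power_add[symmetric] expo)
    finally show "rho a b (p ^ e 1) (p ^ e 2) (p ^ e 3) = p ^ (2 * e i + e j + e k)" .
  next
    assume "int p dvd Delta a b"
    have p1: "p \<ge> 1" using p prime_gt_0_nat by (simp add: Suc_leI)
    have r': "a j * b k - a k * b j = res a b j k" unfolding res_def ..
    have r'nz: "a j * b k - a k * b j \<noteq> 0" using resnz r' by simp
    have mres: "multiplicity (int p) (a j * b k - a k * b j) \<le> multiplicity (int p) (Delta a b)"
      unfolding r' by (rule dvd_imp_multiplicity_le[OF resdvd Dnz])
    have "{(x,y). 0 \<le> x \<and> x < ?q \<and> 0 \<le> y \<and> y < ?q \<and> Q i x y \<and> Q j x y \<and> Q k x y} \<subseteq> T"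
      unfolding T_def by blast
    then have "rho a b (p ^ e 1) (p ^ e 2) (p ^ e 3) \<le> card T" unfolding rT by (rule card_mono[OF finT])
    also have "\<dots> \<le> p ^ (N - e k + min (e k) (multiplicity (int p) (gcd (a k) (b k))))
        * p ^ (N - e j + min (e j) (multiplicity (int p) (a j * b k - a k * b j)))"
      unfolding Tcard by (rule part_bound[OF p fj fk knz r'nz])
    also have "\<dots> \<le> p ^ (N - e k + min (e k) (multiplicity (int p) (ell a b k)))
        * p ^ (N - e j + min (e j) (multiplicity (int p) (Delta a b)))"
      unfolding ell_def using mres p1 by (intro mult_le_mono2 power_increasing) auto
    also have "\<dots> = p ^ (2 * e i + e j + e k + min (e j) (multiplicity (int p) (Delta a b))
                  + min (e k) (multiplicity (int p) (ell a b k)))"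
    proof -
      have "N - e k + min (e k) (multiplicity (int p) (ell a b k)) + (N - e j + min (e j) (multiplicity (int p) (Delta a b)))
          = 2 * e i + e j + e k + min (e j) (multiplicity (int p) (Delta a b)) + min (e k) (multiplicity (int p) (ell a b k))"
        using NN by linarith
      then show ?thesis by (metis power_add)
    qed
    finally show "rho a b (p ^ e 1) (p ^ e 2) (p ^ e 3) \<le> p ^ (2 * e i + e j + e k + min (e j) (multiplicity (int p) (Delta a b))
                  + min (e k) (multiplicity (int p) (ell a b k)))" .
  qed
qed


lemma perm3:
  fixes i j k :: nat
  assumes "i = 1 \<or> i = 2 \<or> i = 3" "j = 1 \<or> j = 2 \<or> j = 3" "k = 1 \<or> k = 2 \<or> k = 3"
   "i = 1 \<or> j = 1 \<or> k = 1" "i = 2 \<or> j = 2 \<or> k = 2" "i = 3 \<or> j = 3 \<or> k = 3"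
  shows "(i,j,k) \<in> {(1,2,3),(1,3,2),(2,1,3),(2,3,1),(3,1,2),(3,2,1)}"
  using assms(1-3) apply (elim disjE) using assms(4-6) by simp_all


lemma part_i_rho:
  fixes a b :: "nat \<Rightarrow> int" and p :: nat and e :: nat and m :: nat
  assumes Dnz: "Delta a b \<noteq> 0" and p: "prime p" and mm: "m \<in> {1,2,3}"
    and mn: "min e (multiplicity (int p) (ell a b m)) = 0"
  shows "card {(x,y). 0 \<le> x \<and> x < int p ^ e \<and> 0 \<le> y \<and> y < int p ^ e \<and>
            int p ^ e dvd a m * x + b m * y} = p ^ e"
proof -
  have nz: "a m \<noteq> 0 \<or> b m \<noteq> 0" by (rule form_nz[OF Dnz mm])
  have g: "gcd (a m) (b m) \<noteq> 0" using nz by simp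
  have cop: "coprime (gcd (a m) (b m)) (int p ^ e)"
    by (rule cop_from_min[OF p g mn[unfolded ell_def]])
  show ?thesis by (rule part_i[OF nz p cop])
qed

theorem lemma3:
  fixes a b :: "nat \<Rightarrow> int" and p :: nat and e :: "nat \<Rightarrow> nat"
  assumes nonprop: "\<forall>i\<in>{1,2,3}. \<forall>j\<in>{1,2,3}. i \<noteq> j \<longrightarrow> \<not> proportional a b i j"
    and Delta_nz: "Delta a b \<noteq> 0"
    and p: "prime p"
  shows
    "(min (e 1) (multiplicity (int p) (ell a b 1)) = 0 \<longrightarrow> rho a b (p ^ e 1) 1 1 = p ^ e 1) \<and>
     (min (e 2) (multiplicity (int p) (ell a b 2)) = 0 \<longrightarrow> rho a b 1 (p ^ e 2) 1 = p ^ e 2) \<and>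
     (min (e 3) (multiplicity (int p) (ell a b 3)) = 0 \<longrightarrow> rho a b 1 1 (p ^ e 3) = p ^ e 3) \<and>
     (\<forall>i j k. {i, j, k} = {1, 2, 3} \<and> e i \<le> e j \<and> e j \<le> e k \<longrightarrow>
        (\<not> int p dvd Delta a b \<longrightarrow>
           rho a b (p ^ e 1) (p ^ e 2) (p ^ e 3) = p ^ (2 * e i + e j + e k)) \<and>
        (int p dvd Delta a b \<longrightarrow>
           rho a b (p ^ e 1) (p ^ e 2) (p ^ e 3) \<le>
             p ^ (2 * e i + e j + e k + min (e j) (multiplicity (int p) (Delta a b))
                  + min (e k) (multiplicity (int p) (ell a b k)))))"
proof (intro conjI impI allI)
  assume m: "min (e 1) (multiplicity (int p) (ell a b 1)) = 0"
  have "rho a b (p ^ e 1) 1 1 = card {(x,y). 0 \<le> x \<and> x < int p ^ e 1 \<and> 0 \<le> y \<and> y < int p ^ e 1 \<and>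
            int p ^ e 1 dvd a 1 * x + b 1 * y}" unfolding rho_def lin_def by simp
  then show "rho a b (p ^ e 1) 1 1 = p ^ e 1" using part_i_rho[OF Delta_nz p _ m] by simp
next
  assume m: "min (e 2) (multiplicity (int p) (ell a b 2)) = 0"
  have "rho a b 1 (p ^ e 2) 1 = card {(x,y). 0 \<le> x \<and> x < int p ^ e 2 \<and> 0 \<le> y \<and> y < int p ^ e 2 \<and>
            int p ^ e 2 dvd a 2 * x + b 2 * y}" unfolding rho_def lin_def by simp
  then show "rho a b 1 (p ^ e 2) 1 = p ^ e 2" using part_i_rho[OF Delta_nz p _ m] by simp
next
  assume m: "min (e 3) (multiplicity (int p) (ell a b 3)) = 0"
  have "rho a b 1 1 (p ^ e 3) = card {(x,y). 0 \<le> x \<and> x < int p ^ e 3 \<and> 0 \<le> y \<and> y < int p ^ e 3 \<and>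
            int p ^ e 3 dvd a 3 * x + b 3 * y}" unfolding rho_def lin_def by simp
  then show "rho a b 1 1 (p ^ e 3) = p ^ e 3" using part_i_rho[OF Delta_nz p _ m] by simp
next
  fix i j k :: nat
  assume h: "{i, j, k} = {1, 2, 3} \<and> e i \<le> e j \<and> e j \<le> e k"
  then have eq: "{i, j, k} = {1, 2, 3}" and eij: "e i \<le> e j" and ejk: "e j \<le> e k" by auto
  have mem: "i \<in> {1,2,3}" "j \<in> {1,2,3}" "k \<in> {1,2,3}" "1 \<in> {i,j,k}" "2 \<in> {i,j,k}" "3 \<in> {i,j,k}"
    using eq by blast+
  have perm: "(i,j,k) \<in> {(1,2,3),(1,3,2),(2,1,3),(2,3,1),(3,1,2),(3,2,1)}"
  proof (rule perm3)
    show "i = 1 \<or> i = 2 \<or> i = 3" "j = 1 \<or> j = 2 \<or> j = 3" "k = 1 \<or> k = 2 \<or> k = 3"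
      using mem(1-3) by auto
    show "i = 1 \<or> j = 1 \<or> k = 1" "i = 2 \<or> j = 2 \<or> k = 2" "i = 3 \<or> j = 3 \<or> k = 3"
      using mem(4-6) by auto
  qed
  note res = part_ii[OF Delta_nz p perm eij ejk]
  show "\<not> int p dvd Delta a b \<Longrightarrow> rho a b (p ^ e 1) (p ^ e 2) (p ^ e 3) = p ^ (2 * e i + e j + e k)"
    using res by blast
  show "int p dvd Delta a b \<Longrightarrow>
           rho a b (p ^ e 1) (p ^ e 2) (p ^ e 3) \<le>
             p ^ (2 * e i + e j + e k + min (e j) (multiplicity (int p) (Delta a b))
                  + min (e k) (multiplicity (int p) (ell a b k)))"
    using res by blast
qed


end
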